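(* Let $\Gamma$ be a skew-symmetric graph which has the Kahan-Poisson property. Then every induced subgraph $\Gamma'$ of $\Gamma$ (on a non-empty vertex subset) has the Kahan-Poisson property.
   Context: $\mathbb F\in\{\mathbb R,\mathbb C\}$. A skew-symmetric graph is $\Gamma=(S,A)$, $S=\{1,\dots,n\}$, $A=(a_{i,j})$ skew-symmetric over $\mathbb F$; the induced subgraph on $S'\subset S$ is $(S',A|_{S'\times S'})$. Its Poisson bracket on $\mathbb F(x)$ is $\{x_i,x_j\}=a_{i,j}x_ix_j$; its Kahan morphism is $K(x_i)=\tilde x_i$ with $\tilde x_i$ the unique solution of $\tilde x_i-x_i=\tilde x_i\sum_ja_{i,j}x_j+x_i\sum_ja_{i,j}\tilde x_j$; $\Gamma$ has the Kahan-Poisson property if $\{\tilde x_i,\tilde x_j\}=a_{i,j}\tilde x_i\tilde x_j$ for all $i,j$. *)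

theory Defs
  imports "HOL-Analysis.Analysis"
begin

text \<open>A skew-symmetric graph (S, A): a finite non-empty vertex set S (of naturals) and
  a matrix A (only its entries on S x S matter) that is skew-symmetric on S.\<close>

definition skew_graph :: "nat set \<Rightarrow> (nat \<Rightarrow> nat \<Rightarrow> 'a::real_normed_field) \<Rightarrow> bool" where
  "skew_graph S A \<longleftrightarrow> finite S \<and> S \<noteq> {} \<and> (\<forall>i\<in>S. \<forall>j\<in>S. A i j = - A j i)"

definition kahan_eqs :: "nat set \<Rightarrow> (nat \<Rightarrow> nat \<Rightarrow> 'a::real_normed_field) \<Rightarrow> (nat \<Rightarrow> 'a) \<Rightarrow> (nat \<Rightarrow> 'a) \<Rightarrow> bool" where
  "kahan_eqs S A x y \<longleftrightarrow> (\<forall>i. i \<notin> S \<longrightarrow> y i = 0) \<and>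
     (\<forall>i\<in>S. y i - x i = y i * (\<Sum>j\<in>S. A i j * x j) + x i * (\<Sum>j\<in>S. A i j * y j))"

text \<open>Points where the Kahan morphism (a rational map) is defined: the linear system
  has a unique solution.\<close>

definition kahan_defined :: "nat set \<Rightarrow> (nat \<Rightarrow> nat \<Rightarrow> 'a::real_normed_field) \<Rightarrow> (nat \<Rightarrow> 'a) \<Rightarrow> bool" where
  "kahan_defined S A x \<longleftrightarrow> (\<exists>!y. kahan_eqs S A x y)"

definition kahan :: "nat set \<Rightarrow> (nat \<Rightarrow> nat \<Rightarrow> 'a::real_normed_field) \<Rightarrow> (nat \<Rightarrow> 'a) \<Rightarrow> (nat \<Rightarrow> 'a)" where
  "kahan S A x = (THE y. kahan_eqs S A x y)"

definition partial :: "((nat \<Rightarrow> 'a::real_normed_field) \<Rightarrow> 'a) \<Rightarrow> nat \<Rightarrow> (nat \<Rightarrow> 'a) \<Rightarrow> 'a" where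
  "partial f k x = deriv (\<lambda>t. f (x(k := t))) (x k)"

text \<open>The log-canonical Poisson bracket {f,g}(x) = sum_{k,l} a_kl x_k x_l d_k f d_l g,
  i.e. the bracket determined by {x_k, x_l} = a_kl x_k x_l.\<close>

definition pbracket :: "nat set \<Rightarrow> (nat \<Rightarrow> nat \<Rightarrow> 'a::real_normed_field) \<Rightarrow>
    ((nat \<Rightarrow> 'a) \<Rightarrow> 'a) \<Rightarrow> ((nat \<Rightarrow> 'a) \<Rightarrow> 'a) \<Rightarrow> (nat \<Rightarrow> 'a) \<Rightarrow> 'a" where
  "pbracket S A f g x = (\<Sum>k\<in>S. \<Sum>l\<in>S. A k l * x k * x l * partial f k x * partial g l x)"

text \<open>Kahan-Poisson property: {K(x_i), K(x_j)} = a_ij K(x_i) K(x_j) as rational functions,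
  i.e. at every point where the Kahan morphism is defined.\<close>

definition kahan_poisson :: "nat set \<Rightarrow> (nat \<Rightarrow> nat \<Rightarrow> 'a::real_normed_field) \<Rightarrow> bool" where
  "kahan_poisson S A \<longleftrightarrow>
     (\<forall>x. kahan_defined S A x \<longrightarrow> (\<forall>i\<in>S. \<forall>j\<in>S.
        pbracket S A (\<lambda>z. kahan S A z i) (\<lambda>z. kahan S A z j) x
          = A i j * kahan S A x i * kahan S A x j))"

end

theory Submission
  imports Defs Jordan_Normal_Form.Determinant
begin


lemma L1: assumes M: "(M::'a::field mat) \<in> carrier_mat n n" and d: "det M \<noteq> 0"
  and h: "\<forall>r<n. (\<Sum>c<n. M$$(r,c) * v c) = 0" and c: "c < n"
  shows "v c = 0"
proof -
  let ?w = "vec n v"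
  have "M *\<^sub>v ?w = 0\<^sub>v n"
    using M h by (intro eq_vecI) (auto simp: scalar_prod_def lessThan_atLeast0)
  hence "?w = 0\<^sub>v n" using det_0_iff_vec_prod_zero[OF M] d vec_carrier by blast
  hence "?w $ c = 0" using c by simp
  thus ?thesis using c by simp
qed

lemma L2: assumes M: "(M::'a::field mat) \<in> carrier_mat n n" and d: "det M = 0"
  shows "\<exists>v. (\<exists>c<n. v c \<noteq> 0) \<and> (\<forall>r<n. (\<Sum>c<n. M$$(r,c) * v c) = 0)"
proof -
  obtain w where w: "w \<in> carrier_vec n" "w \<noteq> 0\<^sub>v n" "M *\<^sub>v w = 0\<^sub>v n"
    using det_0_iff_vec_prod_zero[OF M] d by auto
  have "\<exists>c<n. w $ c \<noteq> 0" using w(1,2) by (metis carrier_vecD eq_vecI index_zero_vec(1) index_zero_vec(2))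
  moreover have "\<forall>r<n. (\<Sum>c<n. M$$(r,c) * w $ c) = 0"
  proof (intro allI impI)
    fix r assume r: "r < n"
    have "(M *\<^sub>v w) $ r = 0" using w(3) r by simp
    thus "(\<Sum>c<n. M$$(r,c) * w $ c) = 0" using M r w(1) by (auto simp: scalar_prod_def lessThan_atLeast0)
  qed
  ultimately show ?thesis by blast
qed

lemma L3: assumes M: "(M::'a::field mat) \<in> carrier_mat n n" and r: "r < n"
  shows "(\<Sum>c<n. M$$(r,c) * (\<Sum>d<n. adj_mat M $$(c,d) * b d)) = det M * b r"
proof -
  have A: "adj_mat M \<in> carrier_mat n n" "M * adj_mat M = det M \<cdot>\<^sub>m 1\<^sub>m n" using adj_mat[OF M] by auto
  have "(\<Sum>c<n. M$$(r,c) * (\<Sum>d<n. adj_mat M $$(c,d) * b d)) = (\<Sum>d<n. (\<Sum>c<n. M$$(r,c) * adj_mat M $$(c,d)) * b d)"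
    by (simp add: sum_distrib_left sum_distrib_right mult.assoc) (rule sum.swap)
  also have "\<dots> = (\<Sum>d<n. (M * adj_mat M) $$ (r,d) * b d)"
    using M A(1) r by (intro sum.cong refl) (auto simp: scalar_prod_def lessThan_atLeast0)
  also have "\<dots> = (\<Sum>d<n. (if d = r then det M * b d else 0))"
    using A(2) r by (intro sum.cong refl) auto
  also have "\<dots> = det M * b r" using r by (simp add: sum.delta)
  finally show ?thesis .
qed



definition enum :: "nat set \<Rightarrow> nat \<Rightarrow> nat" where "enum T r = sorted_list_of_set T ! r"
definition idx :: "nat set \<Rightarrow> nat \<Rightarrow> nat" where "idx T i = the_inv_into {..<card T} (enum T) i"
definition coef :: "nat set \<Rightarrow> (nat \<Rightarrow> nat \<Rightarrow> 'a::real_normed_field) \<Rightarrow> (nat \<Rightarrow> 'a) \<Rightarrow> nat \<Rightarrow> nat \<Rightarrow> 'a" where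
  "coef T A x i j = (if i = j then 1 - (\<Sum>l\<in>T. A i l * x l) else 0) - x i * A i j"
definition KM :: "nat set \<Rightarrow> (nat \<Rightarrow> nat \<Rightarrow> 'a::real_normed_field) \<Rightarrow> (nat \<Rightarrow> 'a) \<Rightarrow> 'a mat" where
  "KM T A x = mat (card T) (card T) (\<lambda>(r,c). coef T A x (enum T r) (enum T c))"
definition KD :: "nat set \<Rightarrow> (nat \<Rightarrow> nat \<Rightarrow> 'a::real_normed_field) \<Rightarrow> (nat \<Rightarrow> 'a) \<Rightarrow> 'a" where
  "KD T A x = det (KM T A x)"
definition KN :: "nat set \<Rightarrow> (nat \<Rightarrow> nat \<Rightarrow> 'a::real_normed_field) \<Rightarrow> (nat \<Rightarrow> 'a) \<Rightarrow> nat \<Rightarrow> 'a" where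
  "KN T A x r = (\<Sum>d<card T. adj_mat (KM T A x) $$ (r,d) * x (enum T d))"
definition KS :: "nat set \<Rightarrow> (nat \<Rightarrow> nat \<Rightarrow> 'a::real_normed_field) \<Rightarrow> (nat \<Rightarrow> 'a) \<Rightarrow> nat \<Rightarrow> 'a" where
  "KS T A x i = (if i \<in> T then KN T A x (idx T i) / KD T A x else 0)"

lemma enum_bij: "finite T \<Longrightarrow> bij_betw (enum T) {..<card T} T"
  unfolding enum_def by (rule bij_betw_nth) auto

lemma enum_in: "finite T \<Longrightarrow> r < card T \<Longrightarrow> enum T r \<in> T"
  using bij_betwE[OF enum_bij] by blast

lemma idx_lt: "finite T \<Longrightarrow> i \<in> T \<Longrightarrow> idx T i < card T"
  unfolding idx_def using bij_betwE[OF bij_betw_the_inv_into[OF enum_bij]] by blast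

lemma enum_idx: "finite T \<Longrightarrow> i \<in> T \<Longrightarrow> enum T (idx T i) = i"
  unfolding idx_def by (rule f_the_inv_into_f_bij_betw[OF enum_bij])

lemma idx_enum: "finite T \<Longrightarrow> r < card T \<Longrightarrow> idx T (enum T r) = r"
  unfolding idx_def by (rule the_inv_into_f_f) (use enum_bij[unfolded bij_betw_def] in auto)

lemma sum_enum: "finite T \<Longrightarrow> (\<Sum>c<card T. g (enum T c)) = (\<Sum>j\<in>T. g j)"
  using sum.reindex_bij_betw[OF enum_bij] by blast

lemma KM_carrier: "KM T A x \<in> carrier_mat (card T) (card T)"
  unfolding KM_def by simp

lemma KM_index: "r < card T \<Longrightarrow> c < card T \<Longrightarrow> KM T A x $$ (r,c) = coef T A x (enum T r) (enum T c)"
  unfolding KM_def by simp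

lemma eq_coef: assumes "finite T" "i \<in> T"
  shows "(y i - x i = y i * (\<Sum>j\<in>T. A i j * x j) + x i * (\<Sum>j\<in>T. A i j * y j))
     \<longleftrightarrow> (\<Sum>j\<in>T. coef T A x i j * y j) = x i"
proof -
  have "(\<Sum>j\<in>T. coef T A x i j * y j) = (\<Sum>j\<in>T. (if i = j then (1 - (\<Sum>l\<in>T. A i l * x l)) * y j else 0)) - (\<Sum>j\<in>T. x i * (A i j * y j))"
    unfolding coef_def by (simp add: left_diff_distrib sum_subtractf mult.assoc if_distrib[of "\<lambda>v. v * _"] cong: if_cong)
  also have "\<dots> = (1 - (\<Sum>l\<in>T. A i l * x l)) * y i - x i * (\<Sum>j\<in>T. A i j * y j)"
    using assms by (simp add: sum.delta sum_distrib_left)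
  finally have e: "(\<Sum>j\<in>T. coef T A x i j * y j) = (1 - (\<Sum>l\<in>T. A i l * x l)) * y i - x i * (\<Sum>j\<in>T. A i j * y j)" .
  show ?thesis unfolding e by (auto simp: algebra_simps)
qed

lemma eqs_iff: assumes T: "finite T"
  shows "kahan_eqs T A x y \<longleftrightarrow> (\<forall>i. i \<notin> T \<longrightarrow> y i = 0) \<and>
     (\<forall>r<card T. (\<Sum>c<card T. KM T A x $$ (r,c) * y (enum T c)) = x (enum T r))"
proof -
  have s: "(\<Sum>c<card T. KM T A x $$ (r,c) * y (enum T c)) = (\<Sum>j\<in>T. coef T A x (enum T r) j * y j)" if "r < card T" for r
    using that sum_enum[OF T, of "\<lambda>j. coef T A x (enum T r) j * y j"]
    by (simp add: KM_index)
  have d1: "(\<forall>r<card T. (\<Sum>c<card T. KM T A x $$ (r,c) * y (enum T c)) = x (enum T r))"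
    if h: "\<forall>i\<in>T. y i - x i = y i * (\<Sum>j\<in>T. A i j * x j) + x i * (\<Sum>j\<in>T. A i j * y j)"
  proof (intro allI impI)
    fix r assume r: "r < card T"
    show "(\<Sum>c<card T. KM T A x $$ (r,c) * y (enum T c)) = x (enum T r)"
      using h enum_in[OF T r] eq_coef[OF T enum_in[OF T r]] s[OF r] by auto
  qed
  have d2: "\<forall>i\<in>T. y i - x i = y i * (\<Sum>j\<in>T. A i j * x j) + x i * (\<Sum>j\<in>T. A i j * y j)"
    if h: "\<forall>r<card T. (\<Sum>c<card T. KM T A x $$ (r,c) * y (enum T c)) = x (enum T r)"
  proof
    fix i assume i: "i \<in> T"
    show "y i - x i = y i * (\<Sum>j\<in>T. A i j * x j) + x i * (\<Sum>j\<in>T. A i j * y j)"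
      using h[rule_format, OF idx_lt[OF T i]] s[OF idx_lt[OF T i]] eq_coef[OF T i] enum_idx[OF T i] by auto
  qed
  have "(\<forall>i\<in>T. y i - x i = y i * (\<Sum>j\<in>T. A i j * x j) + x i * (\<Sum>j\<in>T. A i j * y j))
     \<longleftrightarrow> (\<forall>r<card T. (\<Sum>c<card T. KM T A x $$ (r,c) * y (enum T c)) = x (enum T r))"
    using d1 d2 by (rule iffI)
  thus ?thesis unfolding kahan_eqs_def by (rule arg_cong)
qed



lemma KS_sol: assumes T: "finite T" and D: "KD T A x \<noteq> 0"
  shows "kahan_eqs T A x (KS T A x)"
  unfolding eqs_iff[OF T]
proof (intro conjI allI impI)
  fix i assume "i \<notin> T" thus "KS T A x i = 0" by (simp add: KS_def)
next
  fix r assume r: "r < card T"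
  have e: "(\<Sum>c<card T. KM T A x $$ (r,c) * KN T A x c) = KD T A x * x (enum T r)"
    unfolding KN_def KD_def by (rule L3[OF KM_carrier r])
  have "(\<Sum>c<card T. KM T A x $$ (r,c) * KS T A x (enum T c))
      = (\<Sum>c<card T. KM T A x $$ (r,c) * KN T A x c) / KD T A x"
    by (simp add: sum_divide_distrib KS_def enum_in[OF T] idx_enum[OF T])
  then show "(\<Sum>c<card T. KM T A x $$ (r,c) * KS T A x (enum T c)) = x (enum T r)"
    using e D by simp
qed

lemma sol_unique: assumes T: "finite T" and D: "KD T A x \<noteq> 0"
  and y1: "kahan_eqs T A x y1" and y2: "kahan_eqs T A x y2"
  shows "y1 = y2"
proof
  fix i
  show "y1 i = y2 i"
  proof (cases "i \<in> T")
    case False thus ?thesis using y1 y2 unfolding kahan_eqs_def by auto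
  next
    case True
    let ?v = "\<lambda>c. y1 (enum T c) - y2 (enum T c)"
    have "\<forall>r<card T. (\<Sum>c<card T. KM T A x $$ (r,c) * ?v c) = 0"
      using y1 y2 unfolding eqs_iff[OF T] by (simp add: right_diff_distrib sum_subtractf)
    from L1[OF KM_carrier D[unfolded KD_def] this idx_lt[OF T True]]
    show ?thesis using enum_idx[OF T True] by simp
  qed
qed

lemma defined_iff: assumes T: "finite T"
  shows "kahan_defined T A x \<longleftrightarrow> KD T A x \<noteq> 0"
proof
  assume D: "KD T A x \<noteq> 0"
  show "kahan_defined T A x" unfolding kahan_defined_def
    using KS_sol[OF T D] sol_unique[OF T D] by blast
next
  assume def: "kahan_defined T A x"
  show "KD T A x \<noteq> 0"
  proof
    assume D: "KD T A x = 0"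
    obtain v where v: "\<exists>c<card T. v c \<noteq> 0" "\<forall>r<card T. (\<Sum>c<card T. KM T A x $$ (r,c) * v c) = 0"
      using L2[OF KM_carrier D[unfolded KD_def]] by blast
    obtain y where y: "kahan_eqs T A x y" and yu: "\<And>y'. kahan_eqs T A x y' \<Longrightarrow> y' = y"
      using def unfolding kahan_defined_def by blast
    define y' where "y' = (\<lambda>i. y i + (if i \<in> T then v (idx T i) else 0))"
    have "kahan_eqs T A x y'"
      unfolding eqs_iff[OF T]
    proof (intro conjI allI impI)
      fix i assume "i \<notin> T" thus "y' i = 0" using y unfolding kahan_eqs_def y'_def by auto
    next
      fix r assume r: "r < card T"
      have "(\<Sum>c<card T. KM T A x $$ (r,c) * y' (enum T c)) =
        (\<Sum>c<card T. KM T A x $$ (r,c) * y (enum T c)) + (\<Sum>c<card T. KM T A x $$ (r,c) * v c)"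
        by (simp add: y'_def enum_in[OF T] idx_enum[OF T] distrib_left sum.distrib)
      thus "(\<Sum>c<card T. KM T A x $$ (r,c) * y' (enum T c)) = x (enum T r)"
        using y v(2) r unfolding eqs_iff[OF T] by simp
    qed
    hence "y' = y" by (rule yu)
    moreover obtain c where c: "c < card T" "v c \<noteq> 0" using v(1) by blast
    ultimately show False
      using fun_cong[of y' y "enum T c"] enum_in[OF T c(1)] idx_enum[OF T c(1)] unfolding y'_def by simp
  qed
qed

lemma kahan_formula: assumes T: "finite T" and D: "KD T A x \<noteq> 0"
  shows "kahan T A x = KS T A x"
  unfolding kahan_def by (intro the_equality[where P="kahan_eqs T A x", OF KS_sol[OF T D]] sol_unique[OF T D] KS_sol[OF T D])



inductive_set polyf :: "((nat \<Rightarrow> 'a::real_normed_field) \<Rightarrow> 'a) set" where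
  pconst: "(\<lambda>x. c) \<in> polyf"
| pvar: "(\<lambda>x. x k) \<in> polyf"
| padd: "f \<in> polyf \<Longrightarrow> g \<in> polyf \<Longrightarrow> (\<lambda>x. f x + g x) \<in> polyf"
| pmul: "f \<in> polyf \<Longrightarrow> g \<in> polyf \<Longrightarrow> (\<lambda>x. f x * g x) \<in> polyf"

lemma pdiff: "f \<in> polyf \<Longrightarrow> g \<in> polyf \<Longrightarrow> (\<lambda>x. f x - g x) \<in> polyf"
proof -
  assume "f \<in> polyf" "g \<in> polyf"
  hence "(\<lambda>x. f x + (\<lambda>x. - 1) x * g x) \<in> polyf" by (intro padd pmul pconst)
  thus ?thesis by simp
qed

lemma psum: "finite I \<Longrightarrow> (\<And>i. i \<in> I \<Longrightarrow> (\<lambda>x. f i x) \<in> polyf) \<Longrightarrow> (\<lambda>x. \<Sum>i\<in>I. f i x) \<in> polyf"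
proof (induction I rule: finite_induct)
  case empty then show ?case using pconst[of 0] by simp
next
  case (insert a F) then show ?case by (simp add: padd)
qed

lemma pprod: "finite I \<Longrightarrow> (\<And>i. i \<in> I \<Longrightarrow> (\<lambda>x. f i x) \<in> polyf) \<Longrightarrow> (\<lambda>x. \<Prod>i\<in>I. f i x) \<in> polyf"
proof (induction I rule: finite_induct)
  case empty then show ?case using pconst[of 1] by simp
next
  case (insert a F) then show ?case by (simp add: pmul)
qed

lemma polyf_cont: "f \<in> polyf \<Longrightarrow> (\<And>k. isCont (\<lambda>s. \<gamma> s k) sa) \<Longrightarrow> isCont (\<lambda>s. f (\<gamma> s)) sa"
  by (induction f rule: polyf.induct) (auto intro!: continuous_intros)

lemma polyf_deriv: "f \<in> polyf \<Longrightarrow> \<exists>g\<in>polyf. \<forall>x t. ((\<lambda>t. f (x(k:=t))) has_field_derivative g (x(k:=t))) (at t)"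
proof (induction f rule: polyf.induct)
  case (pconst c)
  then show ?case by (intro bexI[of _ "\<lambda>x. 0"] polyf.pconst) auto
next
  case (pvar j)
  show ?case
  proof (cases "j = k")
    case True
    then show ?thesis by (intro bexI[of _ "\<lambda>x. 1"] polyf.pconst) (auto intro!: derivative_eq_intros)
  next
    case False
    then show ?thesis by (intro bexI[of _ "\<lambda>x. 0"] polyf.pconst) (auto intro!: derivative_eq_intros)
  qed
next
  case (padd f g)
  then obtain f' g' where "f' \<in> polyf" "g' \<in> polyf"
    and "\<forall>x t. ((\<lambda>t. f (x(k:=t))) has_field_derivative f' (x(k:=t))) (at t)"
    "\<forall>x t. ((\<lambda>t. g (x(k:=t))) has_field_derivative g' (x(k:=t))) (at t)" by blast
  then show ?case by (intro bexI[of _ "\<lambda>x. f' x + g' x"] polyf.padd allI DERIV_add) blast+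
next
  case (pmul f g)
  then obtain f' g' where "f' \<in> polyf" "g' \<in> polyf"
    and "\<forall>x t. ((\<lambda>t. f (x(k:=t))) has_field_derivative f' (x(k:=t))) (at t)"
    "\<forall>x t. ((\<lambda>t. g (x(k:=t))) has_field_derivative g' (x(k:=t))) (at t)" by blast
  then show ?case using pmul.hyps by (intro bexI[of _ "\<lambda>x. f' x * g x + g' x * f x"] polyf.padd polyf.pmul allI DERIV_mult) blast+
qed



lemma det_polyf: assumes "\<And>r c. r < m \<Longrightarrow> c < m \<Longrightarrow> (\<lambda>x. F x r c) \<in> polyf"
  shows "(\<lambda>x. det (mat m m (\<lambda>(r,c). F x r c))) \<in> polyf"
proof -
  have eq: "det (mat m m (\<lambda>(r,c). F x r c)) = (\<Sum>p\<in>{p. p permutes {0..<m}}. signof p * (\<Prod>i\<in>{0..<m}. F x i (p i)))" for x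
    unfolding det_def
    by (auto intro!: sum.cong prod.cong simp: permutes_in_image)
  have "(\<lambda>x. \<Sum>p\<in>{p. p permutes {0..<m}}. signof p * (\<Prod>i\<in>{0..<m}. F x i (p i))) \<in> polyf"
    using assms by (intro psum pmul pconst pprod finite_permutations) (auto simp: permutes_in_image)
  thus ?thesis unfolding eq .
qed

lemma pneg: "f \<in> polyf \<Longrightarrow> (\<lambda>x. - f x) \<in> polyf"
  using pdiff[OF pconst[of 0]] by simp

lemma coef_polyf: "finite T \<Longrightarrow> (\<lambda>x. coef T A x i j) \<in> polyf"
  unfolding coef_def
  by (cases "i = j") (auto intro!: pdiff pmul pconst pvar psum pneg)

lemma KM_polyf: "finite T \<Longrightarrow> a < card T \<Longrightarrow> b < card T \<Longrightarrow> (\<lambda>x. KM T A x $$ (a,b)) \<in> polyf"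
  by (simp add: KM_index coef_polyf)

lemma KD_polyf: "finite T \<Longrightarrow> (\<lambda>x. KD T A x) \<in> polyf"
  unfolding KD_def KM_def by (rule det_polyf) (rule coef_polyf)

lemma adj_polyf: assumes T: "finite T" and r: "r < card T" and d: "d < card T"
  shows "(\<lambda>x. adj_mat (KM T A x) $$ (r,d)) \<in> polyf"
proof -
  let ?n = "card T"
  have eq: "adj_mat (KM T A x) $$ (r,d) = (-1)^(d+r) * det (mat (?n - 1) (?n - 1) (\<lambda>(i',j'). KM T A x $$ (if i' < d then i' else Suc i', if j' < r then j' else Suc j')))" for x
    using r d by (simp add: adj_mat_def cofactor_def mat_delete_def KM_carrier[THEN carrier_matD(1)] KM_carrier[THEN carrier_matD(2)])
  have "(\<lambda>x. (-1)^(d+r) * det (mat (?n - 1) (?n - 1) (\<lambda>(i',j'). KM T A x $$ (if i' < d then i' else Suc i', if j' < r then j' else Suc j')))) \<in> polyf"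
    by (intro pmul pconst det_polyf KM_polyf[OF T]) auto
  thus ?thesis unfolding eq .
qed

lemma KN_polyf: assumes T: "finite T" and r: "r < card T"
  shows "(\<lambda>x. KN T A x r) \<in> polyf"
  unfolding KN_def by (intro psum pmul pvar adj_polyf[OF T r]) auto



definition rT :: "nat set \<Rightarrow> (nat \<Rightarrow> 'a::real_normed_field) \<Rightarrow> nat \<Rightarrow> 'a" where
  "rT T x = (\<lambda>l. if l \<in> T then x l else 0)"

lemma eqs_restrict: "kahan_eqs T A (rT T x) y = kahan_eqs T A x y"
  unfolding kahan_eqs_def rT_def by (auto cong: sum.cong)

lemma kahan_restrict: "kahan T A (rT T x) = kahan T A x"
  unfolding kahan_def eqs_restrict ..

lemma defined_restrict: "kahan_defined T A (rT T x) = kahan_defined T A x"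
  unfolding kahan_defined_def eqs_restrict ..

lemma rT_upd: "k \<in> T \<Longrightarrow> rT T ((rT T x)(k := t)) = rT T (x(k:=t))"
  unfolding rT_def by auto

lemma pb_restrict: "pbracket T A (\<lambda>z. kahan T A z i) (\<lambda>z. kahan T A z j) (rT T x)
   = pbracket T A (\<lambda>z. kahan T A z i) (\<lambda>z. kahan T A z j) x"
proof -
  have p: "partial (\<lambda>z. kahan T A z i) k (rT T x) = partial (\<lambda>z. kahan T A z i) k x" if "k \<in> T" for k i
  proof -
    have "(\<lambda>t. kahan T A ((rT T x)(k := t)) i) = (\<lambda>t. kahan T A (x(k := t)) i)"
      using rT_upd[OF that] by (metis kahan_restrict)
    moreover have "rT T x k = x k" using that by (simp add: rT_def)
    ultimately show ?thesis unfolding partial_def by simp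
  qed
  have xk: "rT T x k = x k" if "k \<in> T" for k using that by (simp add: rT_def)
  show ?thesis unfolding pbracket_def
    by (intro sum.cong refl) (simp only: p xk)
qed

lemma ev_nz: fixes f :: "'a::real_normed_field \<Rightarrow> 'b::real_normed_field"
  shows "isCont f a \<Longrightarrow> f a \<noteq> c \<Longrightarrow> eventually (\<lambda>t. f t \<noteq> c) (nhds a)"
  unfolding eventually_nhds_conv_at continuous_at using tendsto_imp_eventually_ne[of f "f a" "at a" c] by blast

lemma line_cont: "isCont (\<lambda>t. (z(k:=t)) l) a"
  by (cases "l = k") auto

lemma partial_formula:
  assumes T: "finite T" and i: "i \<in> T" and D: "KD T A z \<noteq> 0"
    and hN: "\<forall>x t. ((\<lambda>t. KN T A (x(k:=t)) (idx T i)) has_field_derivative dN (x(k:=t))) (at t)"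
    and hD: "\<forall>x t. ((\<lambda>t. KD T A (x(k:=t))) has_field_derivative dD (x(k:=t))) (at t)"
  shows "partial (\<lambda>w. kahan T A w i) k z
       = (dN z * KD T A z - KN T A z (idx T i) * dD z) / (KD T A z * KD T A z)"
proof -
  have zz: "z(k := z k) = z" by simp
  have dN: "((\<lambda>t. KN T A (z(k:=t)) (idx T i)) has_field_derivative dN z) (at (z k))"
    using hN[rule_format, of z "z k"] zz by simp
  have dD: "((\<lambda>t. KD T A (z(k:=t))) has_field_derivative dD z) (at (z k))"
    using hD[rule_format, of z "z k"] zz by simp
  have q: "((\<lambda>t. KN T A (z(k:=t)) (idx T i) / KD T A (z(k:=t))) has_field_derivative
     (dN z * KD T A z - KN T A z (idx T i) * dD z) / (KD T A z * KD T A z)) (at (z k))"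
    using DERIV_divide[OF dN dD] D zz by simp
  have ev: "eventually (\<lambda>t. KD T A (z(k:=t)) \<noteq> 0) (nhds (z k))"
    using ev_nz[OF DERIV_isCont[OF dD]] D zz by simp
  have ev2: "eventually (\<lambda>t. kahan T A (z(k:=t)) i = KN T A (z(k:=t)) (idx T i) / KD T A (z(k:=t))) (nhds (z k))"
    using ev by eventually_elim (simp add: kahan_formula[OF T] KS_def i)
  have "((\<lambda>t. kahan T A (z(k:=t)) i) has_field_derivative
     (dN z * KD T A z - KN T A z (idx T i) * dD z) / (KD T A z * KD T A z)) (at (z k))"
    using q DERIV_cong_ev[OF refl ev2 refl] by simp
  thus ?thesis unfolding partial_def by (rule DERIV_imp_deriv)
qed

definition good :: "nat set \<Rightarrow> nat set \<Rightarrow> (nat \<Rightarrow> nat \<Rightarrow> 'a::real_normed_field) \<Rightarrow> (nat \<Rightarrow> 'a) \<Rightarrow> bool" where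
  "good S T A z \<longleftrightarrow> (\<forall>l. l \<notin> T \<longrightarrow> z l = 0) \<and> (\<forall>i\<in>S-T. (\<Sum>j\<in>S. A i j * z j) \<noteq> 1)"

lemma sum_sub: "finite S \<Longrightarrow> T \<subseteq> S \<Longrightarrow> (\<forall>l. l \<notin> T \<longrightarrow> z l = 0) \<Longrightarrow> (\<Sum>j\<in>S. (A j::'a::comm_ring_1) * z j) = (\<Sum>j\<in>T. A j * z j)"
  by (rule sum.mono_neutral_right) (auto intro: finite_subset)

lemma eqs_embed: assumes S: "finite S" and TS: "T \<subseteq> S" and g: "good S T A z"
  shows "kahan_eqs S A z y \<longleftrightarrow> kahan_eqs T A z y"
proof
  have z0: "\<forall>l. l \<notin> T \<longrightarrow> z l = 0" and L: "\<forall>i\<in>S-T. (\<Sum>j\<in>S. A i j * z j) \<noteq> 1" using g unfolding good_def by auto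
  assume h: "kahan_eqs S A z y"
  have y0: "\<forall>l. l \<notin> T \<longrightarrow> y l = 0"
  proof (intro allI impI)
    fix l assume l: "l \<notin> T"
    show "y l = 0"
    proof (cases "l \<in> S")
      case False thus ?thesis using h unfolding kahan_eqs_def by auto
    next
      case True
      have "y l - z l = y l * (\<Sum>j\<in>S. A l j * z j) + z l * (\<Sum>j\<in>S. A l j * y j)" using h True unfolding kahan_eqs_def by auto
      hence "y l * (1 - (\<Sum>j\<in>S. A l j * z j)) = 0" using z0 l by (simp add: algebra_simps)
      thus ?thesis using L True l by auto
    qed
  qed
  show "kahan_eqs T A z y" unfolding kahan_eqs_def
  proof (intro conjI ballI y0)
    fix i assume i: "i \<in> T"
    have "y i - z i = y i * (\<Sum>j\<in>S. A i j * z j) + z i * (\<Sum>j\<in>S. A i j * y j)" using h i TS unfolding kahan_eqs_def by auto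
    thus "y i - z i = y i * (\<Sum>j\<in>T. A i j * z j) + z i * (\<Sum>j\<in>T. A i j * y j)"
      using sum_sub[OF S TS z0, of "A i"] sum_sub[OF S TS y0, of "A i"] by simp
  qed
next
  have z0: "\<forall>l. l \<notin> T \<longrightarrow> z l = 0" using g unfolding good_def by auto
  assume h: "kahan_eqs T A z y"
  have y0: "\<forall>l. l \<notin> T \<longrightarrow> y l = 0" using h unfolding kahan_eqs_def by auto
  show "kahan_eqs S A z y" unfolding kahan_eqs_def
  proof (intro conjI ballI allI impI)
    fix i assume "i \<notin> S" thus "y i = 0" using y0 TS by auto
  next
    fix i assume i: "i \<in> S"
    show "y i - z i = y i * (\<Sum>j\<in>S. A i j * z j) + z i * (\<Sum>j\<in>S. A i j * y j)"
    proof (cases "i \<in> T")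
      case True
      then show ?thesis using h sum_sub[OF S TS z0, of "A i"] sum_sub[OF S TS y0, of "A i"] unfolding kahan_eqs_def by auto
    next
      case False
      then show ?thesis using y0 z0 by simp
    qed
  qed
qed



lemma polyf_deriv_all: "f \<in> polyf \<Longrightarrow> \<exists>df. \<forall>k. df k \<in> polyf \<and>
   (\<forall>x t. ((\<lambda>t. f (x(k:=t))) has_field_derivative df k (x(k:=t))) (at t))"
  using polyf_deriv[of f] by (intro choice) blast

lemma lin_polyf: "finite S \<Longrightarrow> (\<lambda>w. \<Sum>j\<in>S. (A i j :: 'a::real_normed_field) * w j) \<in> polyf"
  by (intro psum pmul pconst pvar)

lemma at_good:
  assumes S: "finite S" and TS: "T \<subseteq> S" and KP: "kahan_poisson S A" and g: "good S T A z"
    and D: "KD T A z \<noteq> 0" and i: "i \<in> T" and j: "j \<in> T"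
  shows "pbracket T A (\<lambda>w. kahan T A w i) (\<lambda>w. kahan T A w j) z = A i j * kahan T A z i * kahan T A z j"
proof -
  have T: "finite T" using S TS finite_subset by blast
  have eqfun: "kahan_eqs S A w = kahan_eqs T A w" if "good S T A w" for w
    using eqs_embed[OF S TS that] by blast
  have kS: "kahan S A w = kahan T A w" if "good S T A w" for w
    unfolding kahan_def eqfun[OF that] ..
  have defT: "kahan_defined T A z" using defined_iff[OF T] D by blast
  hence defS: "kahan_defined S A z" unfolding kahan_defined_def eqfun[OF g] .
  have H: "pbracket S A (\<lambda>w. kahan S A w i) (\<lambda>w. kahan S A w j) z = A i j * kahan S A z i * kahan S A z j"
    using KP defS i j TS unfolding kahan_poisson_def by blast
  have z0: "\<forall>l. l \<notin> T \<longrightarrow> z l = 0" and L: "\<forall>i\<in>S-T. (\<Sum>j\<in>S. A i j * z j) \<noteq> 1"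
    using g unfolding good_def by auto
  have pe: "partial (\<lambda>w. kahan S A w i') k z = partial (\<lambda>w. kahan T A w i') k z" if k: "k \<in> T" for k i'
  proof -
    have "\<forall>i\<in>S-T. eventually (\<lambda>t. (\<Sum>j\<in>S. A i j * (z(k:=t)) j) \<noteq> 1) (nhds (z k))"
    proof
      fix i assume i: "i \<in> S - T"
      have c: "isCont (\<lambda>t. (\<Sum>j\<in>S. A i j * (z(k:=t)) j)) (z k)"
        by (rule polyf_cont[OF lin_polyf[OF S]], rule line_cont)
      show "eventually (\<lambda>t. (\<Sum>j\<in>S. A i j * (z(k:=t)) j) \<noteq> 1) (nhds (z k))"
        using ev_nz[OF c] L i by simp
    qed
    hence "eventually (\<lambda>t. \<forall>i\<in>S-T. (\<Sum>j\<in>S. A i j * (z(k:=t)) j) \<noteq> 1) (nhds (z k))"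
      using S by (intro eventually_ball_finite) auto
    hence "eventually (\<lambda>t. good S T A (z(k:=t))) (nhds (z k))"
      by eventually_elim (use z0 k in \<open>auto simp: good_def\<close>)
    hence "eventually (\<lambda>t. kahan S A (z(k:=t)) i' = kahan T A (z(k:=t)) i') (nhds (z k))"
      by eventually_elim (simp add: kS)
    thus ?thesis unfolding partial_def by (rule deriv_cong_ev) simp
  qed
  let ?F = "\<lambda>f g k l. A k l * z k * z l * partial f k z * partial g l z"
  have red: "(\<Sum>k\<in>S. \<Sum>l\<in>S. ?F f g k l) = (\<Sum>k\<in>T. \<Sum>l\<in>T. ?F f g k l)" for f g
  proof -
    have "(\<Sum>k\<in>S. \<Sum>l\<in>S. ?F f g k l) = (\<Sum>k\<in>S. \<Sum>l\<in>T. ?F f g k l)"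
      by (intro sum.cong refl sum.mono_neutral_right S TS) (use z0 in auto)
    also have "\<dots> = (\<Sum>k\<in>T. \<Sum>l\<in>T. ?F f g k l)"
      by (intro sum.mono_neutral_right S TS) (use z0 in auto)
    finally show ?thesis .
  qed
  have "pbracket S A (\<lambda>w. kahan S A w i) (\<lambda>w. kahan S A w j) z = pbracket T A (\<lambda>w. kahan T A w i) (\<lambda>w. kahan T A w j) z"
    unfolding pbracket_def red by (intro sum.cong refl) (simp add: pe)
  thus ?thesis using H kS[OF g] by simp
qed



lemma main_T:
  assumes S: "finite S" and TS: "T \<subseteq> S" and KP: "kahan_poisson S A"
  shows "kahan_poisson T A"
  unfolding kahan_poisson_def
proof (intro allI impI ballI)
  fix x0 i j assume def0: "kahan_defined T A x0" and i: "i \<in> T" and j: "j \<in> T"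
  have T: "finite T" using S TS finite_subset by blast
  define z0 where "z0 = rT T x0"
  have zoff: "\<forall>l. l \<notin> T \<longrightarrow> z0 l = 0" unfolding z0_def rT_def by simp
  have D0: "KD T A z0 \<noteq> 0" using def0 defined_restrict[of T A x0] defined_iff[OF T] unfolding z0_def by blast
  obtain dNi where dNi: "\<forall>k. dNi k \<in> polyf \<and> (\<forall>x t. ((\<lambda>t. KN T A (x(k:=t)) (idx T i)) has_field_derivative dNi k (x(k:=t))) (at t))"
    using polyf_deriv_all[OF KN_polyf[OF T idx_lt[OF T i]]] by blast
  obtain dNj where dNj: "\<forall>k. dNj k \<in> polyf \<and> (\<forall>x t. ((\<lambda>t. KN T A (x(k:=t)) (idx T j)) has_field_derivative dNj k (x(k:=t))) (at t))"
    using polyf_deriv_all[OF KN_polyf[OF T idx_lt[OF T j]]] by blast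
  obtain dD where dD: "\<forall>k. dD k \<in> polyf \<and> (\<forall>x t. ((\<lambda>t. KD T A (x(k:=t))) has_field_derivative dD k (x(k:=t))) (at t))"
    using polyf_deriv_all[OF KD_polyf[OF T]] by blast
  define Qi where "Qi k w = (dNi k w * KD T A w - KN T A w (idx T i) * dD k w) / (KD T A w * KD T A w)" for k w
  define Qj where "Qj k w = (dNj k w * KD T A w - KN T A w (idx T j) * dD k w) / (KD T A w * KD T A w)" for k w
  have PB: "pbracket T A (\<lambda>w. kahan T A w i) (\<lambda>w. kahan T A w j) w
     = (\<Sum>k\<in>T. \<Sum>l\<in>T. A k l * w k * w l * Qi k w * Qj l w)" if "KD T A w \<noteq> 0" for w
    unfolding pbracket_def Qi_def Qj_def
    using partial_formula[OF T i that, of k "dNi k" "dD k" for k] partial_formula[OF T j that, of l "dNj l" "dD l" for l] dNi dNj dD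
    by simp
  have KF: "kahan T A w i' = KN T A w (idx T i') / KD T A w" if "KD T A w \<noteq> 0" "i' \<in> T" for w i'
    using kahan_formula[OF T that(1)] that(2) by (simp add: KS_def)
  define \<gamma> where "\<gamma> s = (\<lambda>l. (1 + s) * z0 l)" for s :: 'a
  have g0: "\<gamma> 0 = z0" unfolding \<gamma>_def by simp
  have gc: "isCont (\<lambda>s. p (\<gamma> s)) 0" if "p \<in> polyf" for p
    using that by (rule polyf_cont) (simp add: \<gamma>_def)
  define \<Phi> where "\<Phi> s = (\<Sum>k\<in>T. \<Sum>l\<in>T. A k l * \<gamma> s k * \<gamma> s l * Qi k (\<gamma> s) * Qj l (\<gamma> s))" for s
  define \<Psi> where "\<Psi> s = A i j * (KN T A (\<gamma> s) (idx T i) / KD T A (\<gamma> s)) * (KN T A (\<gamma> s) (idx T j) / KD T A (\<gamma> s))" for s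
  have cD: "isCont (\<lambda>s. KD T A (\<gamma> s)) 0" by (rule gc[OF KD_polyf[OF T]])
  have cNi: "isCont (\<lambda>s. KN T A (\<gamma> s) (idx T i)) 0" by (rule gc[OF KN_polyf[OF T idx_lt[OF T i]]])
  have cNj: "isCont (\<lambda>s. KN T A (\<gamma> s) (idx T j)) 0" by (rule gc[OF KN_polyf[OF T idx_lt[OF T j]]])
  have cg: "isCont (\<lambda>s. \<gamma> s k) 0" for k by (simp add: \<gamma>_def)
  have cdNi: "isCont (\<lambda>s. dNi k (\<gamma> s)) 0" for k using gc dNi by blast
  have cdNj: "isCont (\<lambda>s. dNj k (\<gamma> s)) 0" for k using gc dNj by blast
  have cdD: "isCont (\<lambda>s. dD k (\<gamma> s)) 0" for k using gc dD by blast
  have D0': "KD T A (\<gamma> 0) \<noteq> 0" using D0 g0 by simp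
  have cPhi: "isCont \<Phi> 0"
    unfolding \<Phi>_def Qi_def Qj_def
    by (intro continuous_intros cD cNi cNj cg cdNi cdNj cdD) (use D0' in auto)
  have cPsi: "isCont \<Psi> 0"
    unfolding \<Psi>_def
    by (intro continuous_intros cD cNi cNj) (use D0' in auto)
  have ev1: "eventually (\<lambda>s. KD T A (\<gamma> s) \<noteq> 0) (at 0)"
    using cD D0' unfolding continuous_at by (rule tendsto_imp_eventually_ne)
  have "\<forall>i'\<in>S-T. eventually (\<lambda>s. (\<Sum>l\<in>S. A i' l * \<gamma> s l) \<noteq> 1) (at 0)"
  proof
    fix i' assume i': "i' \<in> S - T"
    define L where "L = (\<Sum>l\<in>S. A i' l * z0 l)"
    have e: "(\<Sum>l\<in>S. A i' l * \<gamma> s l) = (1 + s) * L" for s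
      unfolding L_def \<gamma>_def by (simp add: sum_distrib_left algebra_simps)
    show "eventually (\<lambda>s. (\<Sum>l\<in>S. A i' l * \<gamma> s l) \<noteq> 1) (at 0)"
    proof (cases "L = 1")
      case True
      show ?thesis unfolding e True using eventually_neq_at_within[of 0 0 UNIV]
        by eventually_elim simp
    next
      case False
      have "((\<lambda>s. (1 + s) * L) \<longlongrightarrow> (1 + 0) * L) (at 0)" by (intro tendsto_intros)
      thus ?thesis unfolding e using False by (intro tendsto_imp_eventually_ne) auto
    qed
  qed
  hence "eventually (\<lambda>s. \<forall>i'\<in>S-T. (\<Sum>l\<in>S. A i' l * \<gamma> s l) \<noteq> 1) (at 0)"
    using S by (intro eventually_ball_finite) auto
  hence ev2: "eventually (\<lambda>s. good S T A (\<gamma> s)) (at 0)"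
    by eventually_elim (use zoff in \<open>auto simp: good_def \<gamma>_def\<close>)
  have ev3: "eventually (\<lambda>s. \<Phi> s = \<Psi> s) (at 0)"
    using ev1 ev2
  proof eventually_elim
    case (elim s)
    have "pbracket T A (\<lambda>w. kahan T A w i) (\<lambda>w. kahan T A w j) (\<gamma> s) = A i j * kahan T A (\<gamma> s) i * kahan T A (\<gamma> s) j"
      by (rule at_good[OF S TS KP elim(2) elim(1) i j])
    thus ?case unfolding \<Phi>_def \<Psi>_def PB[OF elim(1)] KF[OF elim(1) i] KF[OF elim(1) j] .
  qed
  have l1: "\<Phi> \<midarrow>0\<rightarrow> \<Psi> 0"
    using cPsi unfolding continuous_at by (rule tendsto_cong[OF ev3, THEN iffD2])
  have l2: "\<Phi> \<midarrow>0\<rightarrow> \<Phi> 0" using cPhi unfolding continuous_at .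
  have eq: "\<Phi> 0 = \<Psi> 0" using LIM_unique[OF l2 l1] .
  have "pbracket T A (\<lambda>w. kahan T A w i) (\<lambda>w. kahan T A w j) z0 = A i j * kahan T A z0 i * kahan T A z0 j"
    using eq unfolding \<Phi>_def \<Psi>_def g0 PB[OF D0] KF[OF D0 i] KF[OF D0 j] .
  thus "pbracket T A (\<lambda>w. kahan T A w i) (\<lambda>w. kahan T A w j) x0 = A i j * kahan T A x0 i * kahan T A x0 j"
    unfolding z0_def pb_restrict kahan_restrict .
qed


theorem proposition4p1:
  fixes S :: "nat set" and A :: "nat \<Rightarrow> nat \<Rightarrow> 'a::real_normed_field"
  assumes "skew_graph S A" and "kahan_poisson S A"
    and "S' \<subseteq> S" and "S' \<noteq> {}"
  shows "skew_graph S' A \<and> kahan_poisson S' A"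
proof
  have S: "finite S" using assms(1) unfolding skew_graph_def by blast
  show "skew_graph S' A" using assms(1,3,4) finite_subset[OF assms(3) S] unfolding skew_graph_def by blast
  show "kahan_poisson S' A" by (rule main_T[OF S assms(3,2)])
qed

end
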